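(* Suppose $\sum_{r:\rho_r\le 1/(4k^2)}\rho_r(1-\rho_r)^k\le\frac{1-\tau}{2}$, and let $\Delta\in(0,1)$ and $\rho_{\max}:=\max_r\rho_r$. (i) If $\rho_{\max}\le\frac12$ and $N\ge 132k^2\ln(2R/\Delta)$, then with probability at least $1-\Delta$, $1-\widehat\tau\ge\frac{1-\tau}{4}$. (ii) If $\rho_{\max}>\frac12$ and $N\ge164k^2\ln(4R/\Delta)+\frac{25\ln(2/\Delta)}{1-\rho_{\max}}$, then with probability at least $1-\Delta$, $1-\widehat\tau\ge\frac{1-\tau}{8}$.
   Context: Let $R\ge 2$ be an integer and $\rho=(\rho_1,\dots,\rho_R)$ a probability vector with $\rho_r>0$ for all $r$. Let $Y_1,\dots,Y_N$ be i.i.d. labels with $\mathbb P(Y_j=r)=\rho_r$, $N_r=|\{j:Y_j=r\}|$, $\widehat\rho_r=N_r/N$. Fix an integer $k\ge1$. Set $\tau:=1-\sum_{r}\rho_r(1-\rho_r)^k$ and $\widehat\tau:=1-\sum_r\widehat\rho_r(1-\widehat\rho_r)^k$. *)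

theory Defs
  imports "HOL-Probability.Probability"
begin

text \<open>Labels are 0,...,R-1; the label distribution rho is a pmf p on nat with
  support exactly {..<R}; rho_r = pmf p r.\<close>

definition tau :: "nat pmf \<Rightarrow> nat \<Rightarrow> nat \<Rightarrow> real" where
  "tau p R k = 1 - (\<Sum>r<R. pmf p r * (1 - pmf p r) ^ k)"

definition rho_hat :: "nat \<Rightarrow> (nat \<Rightarrow> nat) \<Rightarrow> nat \<Rightarrow> real" where
  "rho_hat N Y r = real (card {j\<in>{..<N}. Y j = r}) / real N"

definition tau_hat :: "nat \<Rightarrow> (nat \<Rightarrow> nat) \<Rightarrow> nat \<Rightarrow> nat \<Rightarrow> real" where
  "tau_hat N Y R k = 1 - (\<Sum>r<R. rho_hat N Y r * (1 - rho_hat N Y r) ^ k)"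

definition sample :: "nat pmf \<Rightarrow> nat \<Rightarrow> (nat \<Rightarrow> nat) pmf" where
  "sample p N = Pi_pmf {..<N} 0 (\<lambda>_. p)"

end

theory Submission
  imports Defs
begin
lemma map_pmf_bool_bernoulli:
  fixes q :: "'a pmf"
  shows "map_pmf P q = bernoulli_pmf (measure_pmf.prob q {y. P y})"
proof (rule pmf_eqI)
  fix b :: bool
  have c: "measure_pmf.prob q {y. \<not> P y} = 1 - measure_pmf.prob q {y. P y}"
    using measure_pmf.prob_compl[of "{y. P y}" q] by (simp add: Compl_eq_Diff_UNIV[symmetric] Collect_neg_eq)
  show "pmf (map_pmf P q) b = pmf (bernoulli_pmf (measure_pmf.prob q {y. P y})) b"
    by (cases b) (auto simp: pmf_map vimage_def c)
qed

lemma count_binomial: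
  fixes q :: "'a pmf"
  shows "map_pmf (\<lambda>Y. card {j\<in>{..<N}. P (Y j)}) (Pi_pmf {..<N} d (\<lambda>_. q))
         = binomial_pmf N (measure_pmf.prob q {y. P y})"
proof -
  have "Pi_pmf {..<N} (P d) (\<lambda>_. map_pmf P q) = map_pmf (\<lambda>h. P \<circ> h) (Pi_pmf {..<N} d (\<lambda>_. q))"
    by (rule Pi_pmf_map) auto
  moreover have "binomial_pmf N (measure_pmf.prob q {y. P y}) =
     map_pmf (\<lambda>f. card {x\<in>{..<N}. f x}) (Pi_pmf {..<N} (P d) (\<lambda>_. bernoulli_pmf (measure_pmf.prob q {y. P y})))"
    by (rule binomial_pmf_altdef') auto
  ultimately show ?thesis
    by (simp add: map_pmf_bool_bernoulli[symmetric] map_pmf_comp o_def)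
qed

lemma exp_neg_le: assumes "(x::real) \<ge> 0" shows "exp (-x) \<le> 1 - x + x^2/2"
proof -
  have a: "1 + x + x^2/2 \<le> exp x" using exp_lower_Taylor_quadratic assms by simp
  have b: "(1 + x + x^2/2) * (1 - x + x^2/2) \<ge> 1"
    by (simp add: algebra_simps power2_eq_square) (smt (verit) assms mult_nonneg_nonneg)
  have p: "0 < 1 + x + x^2/2" using assms by (simp add: add_pos_nonneg)
  have "exp (-x) = 1 / exp x" by (simp add: exp_minus field_simps)
  also have "\<dots> \<le> 1 / (1 + x + x^2/2)" using a p by (intro divide_left_mono) auto
  also have "\<dots> \<le> 1 - x + x^2/2" using b p
    by (simp add: divide_le_eq mult.commute)
  finally show ?thesis .
qed

lemma chernoff_lower:
  fixes \<rho> \<delta> :: real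
  assumes "0 \<le> \<rho>" "\<rho> \<le> 1" "0 \<le> \<delta>"
  shows "measure_pmf.prob (binomial_pmf n \<rho>) {x. real x \<le> (1 - \<delta>) * n * \<rho>} \<le> exp (- (\<delta>^2 * n * \<rho> / 2))"
proof -
  let ?M = "binomial_pmf n \<rho>"
  let ?S = "{x. real x \<le> (1 - \<delta>) * n * \<rho>}"
  define a where "a = (1 - \<delta>) * n * \<rho>"
  have sub: "set_pmf ?M \<subseteq> {..n}" using assms by (auto simp: set_pmf_binomial_eq)
  have "measure_pmf.prob ?M ?S = measure_pmf.prob ?M (?S \<inter> set_pmf ?M)"
    by (simp add: measure_Int_set_pmf)
  also have "\<dots> \<le> measure_pmf.prob ?M (?S \<inter> {..n})"
    using sub by (intro measure_pmf.finite_measure_mono) auto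
  also have "\<dots> = (\<Sum>x\<in>?S \<inter> {..n}. pmf ?M x)"
    by (rule measure_measure_pmf_finite) auto
  also have "\<dots> \<le> (\<Sum>x\<in>?S \<inter> {..n}. pmf ?M x * exp (\<delta> * (a - x)))"
  proof (rule sum_mono)
    fix x assume "x \<in> ?S \<inter> {..n}"
    hence "exp (\<delta> * (a - x)) \<ge> 1" using assms by (auto simp: a_def)
    thus "pmf ?M x \<le> pmf ?M x * exp (\<delta> * (a - x))"
      using pmf_nonneg[of ?M x] by (metis mult_left_mono mult.right_neutral)
  qed
  also have "\<dots> \<le> (\<Sum>x\<le>n. pmf ?M x * exp (\<delta> * (a - x)))"
    by (intro sum_mono2) auto
  also have "\<dots> = exp (\<delta> * a) * (\<Sum>x\<le>n. real (n choose x) * (\<rho> * exp (-\<delta>)) ^ x * (1 - \<rho>) ^ (n - x))"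
    using assms by (simp add: sum_distrib_left pmf_binomial power_mult_distrib exp_diff exp_minus
        field_simps exp_of_nat_mult[symmetric] mult.commute)
  also have "\<dots> = exp (\<delta> * a) * (\<rho> * exp (-\<delta>) + (1 - \<rho>)) ^ n"
    by (simp add: binomial_ring)
  also have "\<dots> \<le> exp (\<delta> * a) * exp (\<rho> * exp (-\<delta>) - \<rho>) ^ n"
  proof (intro mult_left_mono power_mono)
    show "\<rho> * exp (- \<delta>) + (1 - \<rho>) \<le> exp (\<rho> * exp (- \<delta>) - \<rho>)"
      using exp_ge_add_one_self[of "\<rho> * exp (- \<delta>) - \<rho>"] by linarith
    show "0 \<le> \<rho> * exp (- \<delta>) + (1 - \<rho>)" using assms by simp
  qed simp
  also have "exp (\<delta> * a) * exp (\<rho> * exp (-\<delta>) - \<rho>) ^ n = exp (\<delta> * a + n * (\<rho> * exp (-\<delta>) - \<rho>))"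
    by (simp add: exp_add exp_of_nat_mult[symmetric])
  also have "\<dots> \<le> exp (- (\<delta>^2 * n * \<rho> / 2))"
  proof -
    have e: "exp (-\<delta>) \<le> 1 - \<delta> + \<delta>^2/2" using exp_neg_le assms by simp
    have "n * \<rho> * exp (-\<delta>) \<le> n * \<rho> * (1 - \<delta> + \<delta>^2/2)"
      using e assms by (intro mult_left_mono) auto
    thus ?thesis unfolding a_def by (simp add: algebra_simps power2_eq_square)
  qed
  finally show ?thesis .
qed

lemma prob_count:
  "measure_pmf.prob (sample p N) {Y. Q (real (card {j\<in>{..<N}. P (Y j)}))}
   = measure_pmf.prob (binomial_pmf N (measure_pmf.prob p {y. P y})) {x. Q (real x)}"
proof -
  have "binomial_pmf N (measure_pmf.prob p {y. P y}) = map_pmf (\<lambda>Y. card {j\<in>{..<N}. P (Y j)}) (sample p N)"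
    unfolding sample_def by (rule count_binomial[symmetric])
  thus ?thesis by (simp add: measure_map_pmf vimage_def)
qed

lemma prob_rho_hat:
  "measure_pmf.prob (sample p N) {Y. Q (rho_hat N Y r)}
   = measure_pmf.prob (binomial_pmf N (pmf p r)) {x. Q (real x / real N)}"
  using prob_count[of p N "\<lambda>x. Q (x / real N)" "\<lambda>y. y = r"]
  by (simp add: rho_hat_def measure_pmf_single)

lemma rho_hat_bounds:
  assumes "N > 0"
  shows "0 \<le> rho_hat N Y r" "rho_hat N Y r \<le> 1"
proof -
  have "card {j\<in>{..<N}. Y j = r} \<le> card {..<N}" by (intro card_mono) auto
  thus "rho_hat N Y r \<le> 1" using assms by (simp add: rho_hat_def)
qed (simp add: rho_hat_def)

lemma det1:
  fixes x \<rho> :: real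
  assumes "0 \<le> x" "x > 7/10 * \<rho>" "x < \<rho> + 1 / (16 * k)" "0 < \<rho>" "\<rho> \<le> 1/2" "k \<ge> 1"
  shows "x * (1 - x) ^ k \<ge> \<rho> * (1 - \<rho>) ^ k / 2"
proof -
  have kpos: "real k \<ge> 1" using assms by simp
  have a: "1 - x \<ge> (1 - \<rho>) * (1 - 1 / (8 * k))"
  proof -
    have "(1 - \<rho>) * (1 / (8 * k)) \<ge> (1/2) * (1 / (8 * k))"
      using assms by (intro mult_right_mono) auto
    thus ?thesis using assms by (simp add: algebra_simps)
  qed
  have b: "(1 - 1 / (8 * k)) ^ k \<ge> 7/8"
  proof -
    have "1 + real k * (- (1 / (8 * k))) \<le> (1 + (- (1 / (8 * k)))) ^ k"
      using kpos by (intro Bernoulli_inequality) (auto simp: field_simps)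
    thus ?thesis using kpos by simp
  qed
  have c: "0 \<le> 1 - 1 / (8 * real k)" using kpos by (simp add: field_simps)
  have "(1 - x) ^ k \<ge> ((1 - \<rho>) * (1 - 1 / (8 * k))) ^ k"
    using a assms c by (intro power_mono) auto
  also have "((1 - \<rho>) * (1 - 1 / (8 * k))) ^ k = (1 - \<rho>) ^ k * (1 - 1 / (8 * k)) ^ k"
    by (rule power_mult_distrib)
  finally have d0: "(1 - x) ^ k \<ge> (1 - \<rho>) ^ k * (1 - 1 / (8 * k)) ^ k" .
  have "(1 - \<rho>) ^ k * (7/8) \<le> (1 - \<rho>) ^ k * (1 - 1 / (8 * k)) ^ k"
    using b assms by (intro mult_left_mono) auto
  hence d: "(1 - x) ^ k \<ge> (1 - \<rho>) ^ k * (7/8)" using d0 by linarith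
  have f: "x * (1 - x) ^ k \<ge> (7/10 * \<rho>) * ((1 - \<rho>) ^ k * (7/8))"
    using d assms by (intro mult_mono) auto
  have e: "0 \<le> \<rho> * (1 - \<rho>) ^ k" using assms by simp
  have g: "(7/10 * \<rho>) * ((1 - \<rho>) ^ k * (7/8)) = 49/80 * (\<rho> * (1 - \<rho>) ^ k)" by simp
  show ?thesis using e f g by linarith
qed

lemma label_good:
  assumes k: "k \<ge> 1" and rho: "1 / (4 * real k ^ 2) < pmf p r" "pmf p r \<le> 1/2"
    and L: "L \<ge> 0" and N: "real N \<ge> 132 * real k ^ 2 * L" "N > 0"
  shows "measure_pmf.prob (sample p N)
          {Y. rho_hat N Y r * (1 - rho_hat N Y r) ^ k < pmf p r * (1 - pmf p r) ^ k / 2} \<le> 2 * exp (- L)"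
proof -
  define \<rho> where "\<rho> = pmf p r"
  have kpos: "real k \<ge> 1" using k by simp
  have "1/(4*real k^2) > 0" using kpos by simp
  hence rpos: "\<rho> > 0" using rho unfolding \<rho>_def by linarith
  have sub: "{Y. rho_hat N Y r * (1 - rho_hat N Y r) ^ k < \<rho> * (1 - \<rho>) ^ k / 2}
     \<subseteq> {Y. rho_hat N Y r \<le> 7/10 * \<rho>} \<union> {Y. rho_hat N Y r \<ge> \<rho> + 1 / (16 * real k)}"
  proof
    fix Y assume Y: "Y \<in> {Y. rho_hat N Y r * (1 - rho_hat N Y r) ^ k < \<rho> * (1 - \<rho>) ^ k / 2}"
    show "Y \<in> {Y. rho_hat N Y r \<le> 7/10 * \<rho>} \<union> {Y. rho_hat N Y r \<ge> \<rho> + 1 / (16 * real k)}"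
    proof (rule ccontr)
      assume "Y \<notin> {Y. rho_hat N Y r \<le> 7/10 * \<rho>} \<union> {Y. rho_hat N Y r \<ge> \<rho> + 1 / (16 * real k)}"
      hence "rho_hat N Y r > 7/10 * \<rho>" "rho_hat N Y r < \<rho> + 1 / (16 * real k)" by auto
      moreover have "0 \<le> rho_hat N Y r" using rho_hat_bounds[OF N(2)] by simp
      moreover have "\<rho> \<le> 1/2" using rho unfolding \<rho>_def by simp
      ultimately have "rho_hat N Y r * (1 - rho_hat N Y r) ^ k \<ge> \<rho> * (1 - \<rho>) ^ k / 2"
        using det1[of "rho_hat N Y r" \<rho> k] rpos k by blast
      thus False using Y by auto
    qed
  qed
  have p01: "\<rho> \<in> {0..1}" unfolding \<rho>_def using pmf_le_1 by auto
  have "measure_pmf.prob (sample p N) {Y. rho_hat N Y r \<le> 7/10 * \<rho>}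
      = measure_pmf.prob (binomial_pmf N \<rho>) {x. real x / real N \<le> 7/10 * \<rho>}"
    unfolding \<rho>_def by (rule prob_rho_hat)
  also have "{x. real x / real N \<le> 7/10 * \<rho>} = {x. real x \<le> (1 - 3/10) * N * \<rho>}"
    using N by (auto simp: field_simps)
  also have "measure_pmf.prob (binomial_pmf N \<rho>) \<dots> \<le> exp (- ((3/10)^2 * N * \<rho> / 2))"
    using p01 by (intro chernoff_lower) auto
  also have "\<dots> \<le> exp (- L)"
  proof -
    have "real N * \<rho> \<ge> 132 * real k ^ 2 * L * (1 / (4 * real k ^ 2))"
      using N rho L rpos unfolding \<rho>_def by (intro mult_mono) auto
    also have "132 * real k ^ 2 * L * (1 / (4 * real k ^ 2)) = 33 * L" using kpos by (simp add: field_simps)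
    finally have h1: "real N * \<rho> \<ge> 33 * L" .
    have h2: "(3/10)^2 * real N * \<rho> = (9/100) * (real N * \<rho>)" by (simp add: power2_eq_square)
    have "- ((3/10)^2 * N * \<rho> / 2) \<le> - L" using h1 h2 L by linarith
    thus ?thesis by simp
  qed
  finally have P1: "measure_pmf.prob (sample p N) {Y. rho_hat N Y r \<le> 7/10 * \<rho>} \<le> exp (- L)" .
  have "measure_pmf.prob (sample p N) {Y. rho_hat N Y r \<ge> \<rho> + 1 / (16 * real k)}
      = measure_pmf.prob (binomial_pmf N \<rho>) {x. \<rho> + 1 / (16 * real k) \<le> real x / real N}"
    unfolding \<rho>_def by (rule prob_rho_hat)
  also have "\<dots> \<le> exp (real_of_int (- 2 * int N) * (1 / (16 * real k))\<^sup>2)"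
    using p01 N by (intro binomial_distribution.prob_ge') (auto simp: binomial_distribution_def)
  also have "\<dots> \<le> exp (- L)"
  proof -
    have "real_of_int (- 2 * int N) * (1 / (16 * real k))\<^sup>2 = - (2 * real N / (256 * real k ^ 2))"
      by (simp add: power2_eq_square field_simps)
    also have "\<dots> \<le> - (2 * (132 * real k ^ 2 * L) / (256 * real k ^ 2))"
      using N kpos by (intro le_imp_neg_le divide_right_mono) (simp_all add: mult_ac)
    also have "\<dots> \<le> - L" using kpos L by (simp add: field_simps)
    finally show ?thesis by simp
  qed
  finally have P2: "measure_pmf.prob (sample p N) {Y. rho_hat N Y r \<ge> \<rho> + 1 / (16 * real k)} \<le> exp (- L)" .
  have "measure_pmf.prob (sample p N) {Y. rho_hat N Y r * (1 - rho_hat N Y r) ^ k < \<rho> * (1 - \<rho>) ^ k / 2}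
     \<le> measure_pmf.prob (sample p N) ({Y. rho_hat N Y r \<le> 7/10 * \<rho>} \<union> {Y. rho_hat N Y r \<ge> \<rho> + 1 / (16 * real k)})"
    using sub by (intro measure_pmf.finite_measure_mono) auto
  also have "\<dots> \<le> measure_pmf.prob (sample p N) {Y. rho_hat N Y r \<le> 7/10 * \<rho>}
      + measure_pmf.prob (sample p N) {Y. rho_hat N Y r \<ge> \<rho> + 1 / (16 * real k)}"
    by (rule measure_Un_le) auto
  also have "\<dots> \<le> 2 * exp (- L)" using P1 P2 by simp
  finally show ?thesis unfolding \<rho>_def .
qed

lemma union_good:
  assumes k: "k \<ge> 1" and S: "S \<subseteq> {..<R}"
    and rho: "\<And>r. r \<in> S \<Longrightarrow> 1 / (4 * real k ^ 2) < pmf p r \<and> pmf p r \<le> 1/2"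
    and L: "L \<ge> 0" and N: "real N \<ge> 132 * real k ^ 2 * L" "N > 0"
    and D: "2 * real R * exp (- L) \<le> \<Delta>"
  shows "measure_pmf.prob (sample p N)
     {Y. (\<Sum>r<R. rho_hat N Y r * (1 - rho_hat N Y r) ^ k) \<ge> (\<Sum>r\<in>S. pmf p r * (1 - pmf p r) ^ k) / 2}
     \<ge> 1 - \<Delta>"
proof -
  define B where "B r = {Y. rho_hat N Y r * (1 - rho_hat N Y r) ^ k < pmf p r * (1 - pmf p r) ^ k / 2}" for r
  define G where "G = {Y. (\<Sum>r<R. rho_hat N Y r * (1 - rho_hat N Y r) ^ k) \<ge> (\<Sum>r\<in>S. pmf p r * (1 - pmf p r) ^ k) / 2}"
  have finS: "finite S" using S finite_subset by blast
  have "- G \<subseteq> (\<Union>r\<in>S. B r)"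
  proof
    fix Y assume Y: "Y \<in> - G"
    show "Y \<in> (\<Union>r\<in>S. B r)"
    proof (rule ccontr)
      assume "Y \<notin> (\<Union>r\<in>S. B r)"
      hence h: "\<And>r. r \<in> S \<Longrightarrow> pmf p r * (1 - pmf p r) ^ k / 2 \<le> rho_hat N Y r * (1 - rho_hat N Y r) ^ k"
        unfolding B_def by auto
      have "(\<Sum>r\<in>S. pmf p r * (1 - pmf p r) ^ k) / 2 = (\<Sum>r\<in>S. pmf p r * (1 - pmf p r) ^ k / 2)"
        by (simp add: sum_divide_distrib)
      also have "\<dots> \<le> (\<Sum>r\<in>S. rho_hat N Y r * (1 - rho_hat N Y r) ^ k)"
        using h by (intro sum_mono) auto
      also have "\<dots> \<le> (\<Sum>r<R. rho_hat N Y r * (1 - rho_hat N Y r) ^ k)"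
        using S rho_hat_bounds[OF N(2), of Y] by (intro sum_mono2) auto
      finally have "Y \<in> G" unfolding G_def by simp
      thus False using Y by simp
    qed
  qed
  hence "measure_pmf.prob (sample p N) (- G) \<le> measure_pmf.prob (sample p N) (\<Union>r\<in>S. B r)"
    by (intro measure_pmf.finite_measure_mono) auto
  also have "\<dots> \<le> (\<Sum>r\<in>S. measure_pmf.prob (sample p N) (B r))"
    using finS by (intro measure_pmf.finite_measure_subadditive_finite) auto
  also have "\<dots> \<le> (\<Sum>r\<in>S. 2 * exp (- L))"
    unfolding B_def using rho k L N by (intro sum_mono label_good) auto
  also have "\<dots> = card S * (2 * exp (- L))" by simp
  also have "\<dots> \<le> R * (2 * exp (- L))"
    using card_mono[OF _ S] by (intro mult_right_mono) auto
  also have "\<dots> \<le> \<Delta>" using D by simp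
  finally have c: "measure_pmf.prob (sample p N) (- G) \<le> \<Delta>" .
  have "measure_pmf.prob (sample p N) (- G) = 1 - measure_pmf.prob (sample p N) G"
    using measure_pmf.prob_compl[of G "sample p N"] by (simp add: Compl_eq_Diff_UNIV)
  thus ?thesis using c unfolding G_def by simp
qed

lemma det2:
  fixes e \<epsilon> :: real
  assumes "0 \<le> e" "e > (1 - 3 / (10 * real k)) * \<epsilon>" "e < \<epsilon> + 1/10" "0 < \<epsilon>" "\<epsilon> \<le> 1/2" "k \<ge> 1"
  shows "(1 - e) * e ^ k \<ge> (1 - \<epsilon>) * \<epsilon> ^ k / 2"
proof -
  have kpos: "real k \<ge> 1" using assms by simp
  have a: "1 - e \<ge> (1 - \<epsilon>) * (4/5)" using assms by simp
  have c: "0 \<le> 1 - 3 / (10 * real k)" using kpos by (simp add: field_simps)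
  have b: "(1 - 3 / (10 * real k)) ^ k \<ge> 7/10"
  proof -
    have "1 + real k * (- (3 / (10 * real k))) \<le> (1 + (- (3 / (10 * real k)))) ^ k"
      using kpos by (intro Bernoulli_inequality) (auto simp: field_simps)
    thus ?thesis using kpos by simp
  qed
  have "e ^ k \<ge> ((1 - 3 / (10 * real k)) * \<epsilon>) ^ k"
    using assms c by (intro power_mono) auto
  also have "((1 - 3 / (10 * real k)) * \<epsilon>) ^ k = (1 - 3 / (10 * real k)) ^ k * \<epsilon> ^ k"
    by (rule power_mult_distrib)
  finally have d0: "e ^ k \<ge> (1 - 3 / (10 * real k)) ^ k * \<epsilon> ^ k" .
  have "7/10 * \<epsilon> ^ k \<le> (1 - 3 / (10 * real k)) ^ k * \<epsilon> ^ k"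
    using b assms by (intro mult_right_mono) auto
  hence d: "e ^ k \<ge> 7/10 * \<epsilon> ^ k" using d0 by linarith
  have f: "(1 - e) * e ^ k \<ge> ((1 - \<epsilon>) * (4/5)) * (7/10 * \<epsilon> ^ k)"
    using a d assms by (intro mult_mono) auto
  have e: "0 \<le> (1 - \<epsilon>) * \<epsilon> ^ k" using assms by simp
  have g: "((1 - \<epsilon>) * (4/5)) * (7/10 * \<epsilon> ^ k) = 14/25 * ((1 - \<epsilon>) * \<epsilon> ^ k)" by simp
  show ?thesis using e f g by linarith
qed

lemma card_split:
  "real (card {j\<in>{..<N}. Y j = m}) = real N - real (card {j\<in>{..<N}. Y j \<noteq> m})"
proof -
  have "card {..<N} = card ({j\<in>{..<N}. Y j = m} \<union> {j\<in>{..<N}. Y j \<noteq> m})"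
    by (rule arg_cong[where f=card]) auto
  also have "\<dots> = card {j\<in>{..<N}. Y j = m} + card {j\<in>{..<N}. Y j \<noteq> m}"
    by (rule card_Un_disjoint) auto
  finally have "card {..<N} = card {j\<in>{..<N}. Y j = m} + card {j\<in>{..<N}. Y j \<noteq> m}" .
  thus ?thesis by simp
qed

lemma aux_div: "0 < (n::nat) \<Longrightarrow> \<not> (x::real) \<le> c * n * e \<Longrightarrow> c * e < x / n"
  by (simp add: pos_less_divide_eq mult_ac)

lemma m_good:
  assumes k: "k \<ge> 1" and eps: "0 < 1 - pmf p m" "1 - pmf p m \<le> 1/2" and N: "N > 0"
    and A: "exp (- ((3 / (10 * real k))^2 * N * (1 - pmf p m) / 2)) \<le> \<Delta> / 2"
    and B: "exp (- (2 * N / 100)) \<le> \<Delta> / 2"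
  shows "measure_pmf.prob (sample p N)
     {Y. rho_hat N Y m * (1 - rho_hat N Y m) ^ k \<ge> pmf p m * (1 - pmf p m) ^ k / 2} \<ge> 1 - \<Delta>"
proof -
  define \<epsilon> where "\<epsilon> = 1 - pmf p m"
  define eh where "eh Y = real (card {j\<in>{..<N}. Y j \<noteq> m}) / real N" for Y
  have rh: "rho_hat N Y m = 1 - eh Y" for Y
  proof -
    have "rho_hat N Y m = (real N - real (card {j\<in>{..<N}. Y j \<noteq> m})) / real N"
      unfolding rho_hat_def by (subst card_split) (rule refl)
    also have "\<dots> = 1 - eh Y"
      using N unfolding eh_def by (simp add: diff_divide_distrib)
    finally show ?thesis .
  qed
  have ehnn: "0 \<le> eh Y" for Y unfolding eh_def by simp
  have pe: "measure_pmf.prob p {y. y \<noteq> m} = \<epsilon>"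
  proof -
    have "{y. y \<noteq> m} = space (measure_pmf p) - {m}" by auto
    thus ?thesis using measure_pmf.prob_compl[of "{m}" p] unfolding \<epsilon>_def
      by (simp add: measure_pmf_single)
  qed
  have e01: "\<epsilon> \<in> {0..1}" using eps unfolding \<epsilon>_def by auto
  have e0: "0 < \<epsilon>" and e1: "\<epsilon> \<le> 1/2" using eps unfolding \<epsilon>_def by auto
  define G where "G = {Y. rho_hat N Y m * (1 - rho_hat N Y m) ^ k \<ge> pmf p m * (1 - pmf p m) ^ k / 2}"
  have sub: "- G \<subseteq> {Y. real (card {j\<in>{..<N}. Y j \<noteq> m}) \<le> (1 - 3 / (10 * real k)) * N * \<epsilon>}
                  \<union> {Y. \<epsilon> + 1/10 \<le> real (card {j\<in>{..<N}. Y j \<noteq> m}) / real N}"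
  proof
    fix Y assume Y: "Y \<in> - G"
    show "Y \<in> {Y. real (card {j\<in>{..<N}. Y j \<noteq> m}) \<le> (1 - 3 / (10 * real k)) * N * \<epsilon>}
                  \<union> {Y. \<epsilon> + 1/10 \<le> real (card {j\<in>{..<N}. Y j \<noteq> m}) / real N}"
    proof (rule ccontr)
      assume "\<not> ?thesis"
      hence h1: "\<not> real (card {j\<in>{..<N}. Y j \<noteq> m}) \<le> (1 - 3 / (10 * real k)) * N * \<epsilon>"
        and h2': "\<not> \<epsilon> + 1/10 \<le> real (card {j\<in>{..<N}. Y j \<noteq> m}) / real N" by blast+
      have h2: "eh Y < \<epsilon> + 1/10" using h2' unfolding eh_def by linarith
      have h1': "eh Y > (1 - 3 / (10 * real k)) * \<epsilon>"
        unfolding eh_def by (rule aux_div[OF N h1])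
      have "(1 - eh Y) * eh Y ^ k \<ge> (1 - \<epsilon>) * \<epsilon> ^ k / 2"
        by (rule det2[OF ehnn h1' h2 e0 e1 k])
      moreover have "rho_hat N Y m * (1 - rho_hat N Y m) ^ k = (1 - eh Y) * eh Y ^ k" using rh by simp
      moreover have "pmf p m * (1 - pmf p m) ^ k = (1 - \<epsilon>) * \<epsilon> ^ k" unfolding \<epsilon>_def by simp
      ultimately have "Y \<in> G" unfolding G_def by simp
      thus False using Y by simp
    qed
  qed
  have P1: "measure_pmf.prob (sample p N) {Y. real (card {j\<in>{..<N}. Y j \<noteq> m}) \<le> (1 - 3 / (10 * real k)) * N * \<epsilon>} \<le> \<Delta> / 2"
  proof -
    have "measure_pmf.prob (sample p N) {Y. real (card {j\<in>{..<N}. Y j \<noteq> m}) \<le> (1 - 3 / (10 * real k)) * N * \<epsilon>}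
        = measure_pmf.prob (binomial_pmf N \<epsilon>) {x. real x \<le> (1 - 3 / (10 * real k)) * N * \<epsilon>}"
      using prob_count[of p N "\<lambda>x. x \<le> (1 - 3 / (10 * real k)) * N * \<epsilon>" "\<lambda>y. y \<noteq> m"] pe by simp
    also have "\<dots> \<le> exp (- ((3 / (10 * real k))^2 * N * \<epsilon> / 2))"
      using e01 by (intro chernoff_lower) auto
    finally show ?thesis using A unfolding \<epsilon>_def by simp
  qed
  have P2: "measure_pmf.prob (sample p N) {Y. \<epsilon> + 1/10 \<le> real (card {j\<in>{..<N}. Y j \<noteq> m}) / real N} \<le> \<Delta> / 2"
  proof -
    have "measure_pmf.prob (sample p N) {Y. \<epsilon> + 1/10 \<le> real (card {j\<in>{..<N}. Y j \<noteq> m}) / real N}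
        = measure_pmf.prob (binomial_pmf N \<epsilon>) {x. \<epsilon> + 1/10 \<le> real x / real N}"
      using prob_count[of p N "\<lambda>x. \<epsilon> + 1/10 \<le> x / real N" "\<lambda>y. y \<noteq> m"] pe by simp
    also have "\<dots> \<le> exp (real_of_int (- 2 * int N) * (1/10)\<^sup>2)"
      using e01 N by (intro binomial_distribution.prob_ge') (auto simp: binomial_distribution_def)
    also have "real_of_int (- 2 * int N) * (1/10)\<^sup>2 = - (2 * N / 100)"
      by (simp add: power2_eq_square)
    finally show ?thesis using B by simp
  qed
  have "measure_pmf.prob (sample p N) (- G) \<le> measure_pmf.prob (sample p N) ({Y. real (card {j\<in>{..<N}. Y j \<noteq> m}) \<le> (1 - 3 / (10 * real k)) * N * \<epsilon>}
                  \<union> {Y. \<epsilon> + 1/10 \<le> real (card {j\<in>{..<N}. Y j \<noteq> m}) / real N})"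
    using sub by (intro measure_pmf.finite_measure_mono) auto
  also have "\<dots> \<le> measure_pmf.prob (sample p N) {Y. real (card {j\<in>{..<N}. Y j \<noteq> m}) \<le> (1 - 3 / (10 * real k)) * N * \<epsilon>}
      + measure_pmf.prob (sample p N) {Y. \<epsilon> + 1/10 \<le> real (card {j\<in>{..<N}. Y j \<noteq> m}) / real N}"
    by (rule measure_Un_le) auto
  also have "\<dots> \<le> \<Delta> / 2 + \<Delta> / 2" using P1 P2 by simp
  finally have "measure_pmf.prob (sample p N) (- G) \<le> \<Delta> / 2 + \<Delta> / 2" .
  moreover have "measure_pmf.prob (sample p N) (- G) = 1 - measure_pmf.prob (sample p N) G"
    using measure_pmf.prob_compl[of G "sample p N"] by (simp add: Compl_eq_Diff_UNIV)
  ultimately show ?thesis unfolding G_def by simp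
qed


lemma eps_big:
  fixes \<epsilon> :: real
  assumes "0 < \<epsilon>" "\<epsilon> < 1/2" "k \<ge> 2" "3 * ((1 - \<epsilon>) * \<epsilon> ^ k) > \<epsilon> * (1 - \<epsilon>) ^ k"
  shows "\<epsilon> > 1/4"
proof (rule ccontr)
  assume "\<not> \<epsilon> > 1/4"
  hence le: "\<epsilon> \<le> 1/4" by simp
  obtain j where j: "k = Suc j" "j \<ge> 1" using assms(3) by (cases k) auto
  have "(3 * \<epsilon>) ^ j \<le> (1 - \<epsilon>) ^ j" using le assms by (intro power_mono) auto
  moreover have "3 * \<epsilon> ^ j \<le> (3 * \<epsilon>) ^ j"
  proof -
    have "(3::real) \<le> 3 ^ j" using j by (cases j) auto
    hence "3 * \<epsilon> ^ j \<le> 3 ^ j * \<epsilon> ^ j" using assms by (intro mult_right_mono) auto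
    thus ?thesis by (simp add: power_mult_distrib)
  qed
  ultimately have a: "3 * \<epsilon> ^ j \<le> (1 - \<epsilon>) ^ j" by linarith
  have pos: "0 < \<epsilon> * (1 - \<epsilon>)" using assms by simp
  have "\<epsilon> * (1 - \<epsilon>) * (3 * \<epsilon> ^ j) \<le> \<epsilon> * (1 - \<epsilon>) * (1 - \<epsilon>) ^ j"
    using a pos by (intro mult_left_mono) auto
  moreover have "3 * ((1 - \<epsilon>) * \<epsilon> ^ k) = \<epsilon> * (1 - \<epsilon>) * (3 * \<epsilon> ^ j)" using j by simp
  moreover have "\<epsilon> * (1 - \<epsilon>) ^ k = \<epsilon> * (1 - \<epsilon>) * (1 - \<epsilon>) ^ j" using j by simp
  ultimately show False using assms(4) by linarith
qed

lemma prob_mono_ge: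
  assumes "A \<subseteq> B" "measure_pmf.prob M A \<ge> c"
  shows "measure_pmf.prob M B \<ge> c"
proof -
  have "measure_pmf.prob M A \<le> measure_pmf.prob M B"
    by (rule measure_pmf.finite_measure_mono) (use assms in auto)
  thus ?thesis using assms by linarith
qed

lemma exp_le_half:
  fixes x \<Delta> :: real
  assumes "x \<ge> ln (2 / \<Delta>)" "0 < \<Delta>"
  shows "exp (- x) \<le> \<Delta> / 2"
proof -
  have "exp (- x) \<le> exp (- ln (2 / \<Delta>))" using assms by simp
  also have "\<dots> = \<Delta> / 2" using assms by (simp add: exp_minus)
  finally show ?thesis .
qed

theorem mainTheorem3:
  fixes p :: "nat pmf" and R k N :: nat and \<Delta> :: real
  assumes R: "R \<ge> 2"
    and supp: "set_pmf p = {..<R}"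
    and k: "k \<ge> 1"
    and small: "(\<Sum>r\<in>{r\<in>{..<R}. pmf p r \<le> 1 / (4 * real k ^ 2)}. pmf p r * (1 - pmf p r) ^ k)
                  \<le> (1 - tau p R k) / 2"
    and \<Delta>: "0 < \<Delta>" "\<Delta> < 1"
  shows "(Max (pmf p ` {..<R}) \<le> 1/2 \<longrightarrow>
            real N \<ge> 132 * real k ^ 2 * ln (2 * real R / \<Delta>) \<longrightarrow>
            measure_pmf.prob (sample p N) {Y. 1 - tau_hat N Y R k \<ge> (1 - tau p R k) / 4} \<ge> 1 - \<Delta>)
       \<and> (Max (pmf p ` {..<R}) > 1/2 \<longrightarrow>
            real N \<ge> 164 * real k ^ 2 * ln (4 * real R / \<Delta>)
                     + 25 * ln (2 / \<Delta>) / (1 - Max (pmf p ` {..<R})) \<longrightarrow>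
            measure_pmf.prob (sample p N) {Y. 1 - tau_hat N Y R k \<ge> (1 - tau p R k) / 8} \<ge> 1 - \<Delta>)"
proof -
  define f where "f r = pmf p r * (1 - pmf p r) ^ k" for r
  define T where "T = (\<Sum>r<R. f r)"
  define Sm where "Sm = {r\<in>{..<R}. pmf p r \<le> 1 / (4 * real k ^ 2)}"
  have T1: "1 - tau p R k = T" unfolding tau_def T_def f_def by simp
  have That: "1 - tau_hat N Y R k = (\<Sum>r<R. rho_hat N Y r * (1 - rho_hat N Y r) ^ k)" for Y
    unfolding tau_hat_def by simp
  have smallT: "sum f Sm \<le> T / 2" using small unfolding T1 Sm_def f_def .
  have fnn: "f r \<ge> 0" for r unfolding f_def using pmf_le_1[of p r] by simp
  have sum1: "(\<Sum>r<R. pmf p r) = 1" by (rule sum_pmf_eq_1) (use supp in auto)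
  have ppos: "pmf p r > 0" if "r < R" for r using supp that by (simp add: pmf_positive_iff)
  have kpos: "real k \<ge> 1" using k by simp
  have finR: "finite {..<R}" by simp
  have neR: "pmf p ` {..<R} \<noteq> {}"
  proof -
    have "0 \<in> {..<R}" using R by simp
    thus ?thesis by blast
  qed
  have maxge: "pmf p r \<le> Max (pmf p ` {..<R})" if "r < R" for r
    using that by (intro Max_ge) auto
  have two: "pmf p r + pmf p s \<le> 1" if "r < R" "s < R" "r \<noteq> s" for r s
  proof -
    have "(\<Sum>i\<in>{r,s}. pmf p i) \<le> (\<Sum>r<R. pmf p r)"
      using that by (intro sum_mono2) auto
    thus ?thesis using that sum1 by simp
  qed
  show ?thesis
  proof (intro conjI impI)
    assume mx: "Max (pmf p ` {..<R}) \<le> 1/2"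
    assume N: "real N \<ge> 132 * real k ^ 2 * ln (2 * real R / \<Delta>)"
    define L where "L = ln (2 * real R / \<Delta>)"
    have Lpos: "L > 0" unfolding L_def using R \<Delta> by (intro ln_gt_zero) (simp add: field_simps)
    have expL: "2 * real R * exp (- L) = \<Delta>" unfolding L_def using R \<Delta> by (simp add: exp_minus)
    have Npos: "N > 0"
    proof -
      have "0 < 132 * real k ^ 2 * L" using Lpos kpos by simp
      thus ?thesis using N unfolding L_def by linarith
    qed
    define S where "S = {r\<in>{..<R}. 1 / (4 * real k ^ 2) < pmf p r}"
    have "measure_pmf.prob (sample p N)
       {Y. (\<Sum>r<R. rho_hat N Y r * (1 - rho_hat N Y r) ^ k) \<ge> (\<Sum>r\<in>S. pmf p r * (1 - pmf p r) ^ k) / 2}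
       \<ge> 1 - \<Delta>"
    proof (rule union_good[OF k])
      show "S \<subseteq> {..<R}" unfolding S_def by auto
      show "\<And>r. r \<in> S \<Longrightarrow> 1 / (4 * real k ^ 2) < pmf p r \<and> pmf p r \<le> 1/2"
      proof -
        fix r assume r: "r \<in> S"
        hence r1: "r < R" "1 / (4 * real k ^ 2) < pmf p r" by (auto simp: S_def)
        have "pmf p r \<le> 1/2" using maxge[OF r1(1)] mx by linarith
        thus "1 / (4 * real k ^ 2) < pmf p r \<and> pmf p r \<le> 1/2" using r1 by simp
      qed
    qed (use Lpos N Npos expL in \<open>auto simp: L_def\<close>)
    moreover have sS: "sum f S \<ge> T / 2"
    proof -
      have "T = sum f ({..<R} - S) + sum f S" unfolding T_def
        by (rule sum.subset_diff) (auto simp: S_def)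
      moreover have "{..<R} - S = Sm" unfolding S_def Sm_def by auto
      ultimately have "T = sum f Sm + sum f S" by simp
      thus ?thesis using smallT by linarith
    qed
    moreover have "{Y. (\<Sum>r<R. rho_hat N Y r * (1 - rho_hat N Y r) ^ k) \<ge> (\<Sum>r\<in>S. pmf p r * (1 - pmf p r) ^ k) / 2}
       \<subseteq> {Y. 1 - tau_hat N Y R k \<ge> (1 - tau p R k) / 4}"
    proof safe
      fix Y assume "(\<Sum>r<R. rho_hat N Y r * (1 - rho_hat N Y r) ^ k) \<ge> (\<Sum>r\<in>S. pmf p r * (1 - pmf p r) ^ k) / 2"
      thus "1 - tau_hat N Y R k \<ge> (1 - tau p R k) / 4"
        unfolding That T1 using sS unfolding f_def by linarith
    qed
    ultimately show "measure_pmf.prob (sample p N) {Y. 1 - tau_hat N Y R k \<ge> (1 - tau p R k) / 4} \<ge> 1 - \<Delta>"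
      using prob_mono_ge by blast
  next
    assume mx: "Max (pmf p ` {..<R}) > 1/2"
    assume N: "real N \<ge> 164 * real k ^ 2 * ln (4 * real R / \<Delta>)
                     + 25 * ln (2 / \<Delta>) / (1 - Max (pmf p ` {..<R}))"
    obtain m where m: "m < R" "pmf p m = Max (pmf p ` {..<R})"
      using Max_in[OF _ neR] by auto
    define \<epsilon> where "\<epsilon> = 1 - pmf p m"
    obtain s where s: "s < R" "s \<noteq> m"
    proof -
      have "(if m = 0 then 1 else 0) < R \<and> (if m = 0 then (1::nat) else 0) \<noteq> m" using R by auto
      thus ?thesis using that by blast
    qed
    have e0: "\<epsilon> > 0" using two[OF m(1) s(1)] s ppos[OF s(1)] unfolding \<epsilon>_def by auto
    have e1: "\<epsilon> < 1/2" using mx m unfolding \<epsilon>_def by simp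
    have rle: "pmf p r \<le> \<epsilon>" if "r < R" "r \<noteq> m" for r
      using two[OF m(1) that(1)] that unfolding \<epsilon>_def by auto
    have N': "real N \<ge> 164 * real k ^ 2 * ln (4 * real R / \<Delta>) + 25 * ln (2 / \<Delta>) / \<epsilon>"
      using N m unfolding \<epsilon>_def by simp
    define L where "L = ln (4 * real R / \<Delta>)"
    have Lpos: "L > 0" unfolding L_def using R \<Delta> by (intro ln_gt_zero) (simp add: field_simps)
    have L2: "L \<ge> ln (2 / \<Delta>)" unfolding L_def using R \<Delta> by (subst ln_le_cancel_iff) (auto simp: field_simps)
    have l2pos: "ln (2 / \<Delta>) > 0" using \<Delta> by (intro ln_gt_zero) (simp add: field_simps)
    have t25: "25 * ln (2 / \<Delta>) / \<epsilon> \<ge> 0" using l2pos e0 by simp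
    have NL: "real N \<ge> 164 * real k ^ 2 * L" using N' t25 unfolding L_def by linarith
    have Npos: "N > 0"
    proof -
      have "0 < 164 * real k ^ 2 * L" using Lpos kpos by simp
      thus ?thesis using NL by linarith
    qed
    define A where "A = f m"
    define Oth where "Oth = sum f ({..<R} - {m})"
    have TAO: "T = A + Oth" unfolding T_def A_def Oth_def using m by (simp add: sum.remove)
    have sumrest: "(\<Sum>r\<in>{..<R} - {m}. pmf p r) = \<epsilon>"
      using sum1 m unfolding \<epsilon>_def by (simp add: sum.remove)
    have Oge: "Oth \<ge> \<epsilon> * (1 - \<epsilon>) ^ k"
    proof -
      have "(\<Sum>r\<in>{..<R} - {m}. pmf p r * (1 - \<epsilon>) ^ k) \<le> Oth"
        unfolding Oth_def f_def
      proof (intro sum_mono mult_left_mono power_mono)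
        fix r assume "r \<in> {..<R} - {m}"
        thus "1 - \<epsilon> \<le> 1 - pmf p r" "0 \<le> 1 - \<epsilon>" using rle e1 by auto
      qed auto
      thus ?thesis using sumrest by (simp add: sum_distrib_right[symmetric])
    qed
    have Aeq: "A = (1 - \<epsilon>) * \<epsilon> ^ k" unfolding A_def f_def \<epsilon>_def by simp
    show "measure_pmf.prob (sample p N) {Y. 1 - tau_hat N Y R k \<ge> (1 - tau p R k) / 8} \<ge> 1 - \<Delta>"
    proof (cases "A \<le> T / 4")
      case True
      define S where "S = {r\<in>{..<R}. r \<noteq> m \<and> 1 / (4 * real k ^ 2) < pmf p r}"
      have "measure_pmf.prob (sample p N)
         {Y. (\<Sum>r<R. rho_hat N Y r * (1 - rho_hat N Y r) ^ k) \<ge> (\<Sum>r\<in>S. pmf p r * (1 - pmf p r) ^ k) / 2}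
         \<ge> 1 - \<Delta>"
      proof (rule union_good[OF k, where L = L])
        show "S \<subseteq> {..<R}" unfolding S_def by auto
        show "\<And>r. r \<in> S \<Longrightarrow> 1 / (4 * real k ^ 2) < pmf p r \<and> pmf p r \<le> 1/2"
          unfolding S_def using rle e1 by fastforce
        show "0 \<le> L" using Lpos by simp
        show "132 * real k ^ 2 * L \<le> real N" using NL Lpos by (smt (verit) mult_right_mono zero_le_power2 of_nat_0_le_iff)
        show "0 < N" by (rule Npos)
        have "2 * real R * exp (- L) = \<Delta> / 2" unfolding L_def using R \<Delta> by (simp add: exp_minus)
        thus "2 * real R * exp (- L) \<le> \<Delta>" using \<Delta> by simp
      qed
      moreover have sS: "sum f S \<ge> T / 4"
      proof -
        have "T = sum f ({..<R} - S) + sum f S" unfolding T_def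
          by (rule sum.subset_diff) (auto simp: S_def)
        moreover have "{..<R} - S = insert m Sm" unfolding S_def Sm_def using m mx kpos
          by (auto simp: field_simps) 
        moreover have "m \<notin> Sm"
        proof
          assume "m \<in> Sm"
          hence "pmf p m \<le> 1 / (4 * real k ^ 2)" unfolding Sm_def by simp
          also have "\<dots> \<le> 1/4" using kpos by (simp add: field_simps)
          finally show False using mx m by simp
        qed
        moreover have "finite Sm" unfolding Sm_def by simp
        ultimately have "T = A + sum f Sm + sum f S" unfolding A_def by simp
        thus ?thesis using smallT True by linarith
      qed
      moreover have "{Y. (\<Sum>r<R. rho_hat N Y r * (1 - rho_hat N Y r) ^ k) \<ge> (\<Sum>r\<in>S. pmf p r * (1 - pmf p r) ^ k) / 2}
         \<subseteq> {Y. 1 - tau_hat N Y R k \<ge> (1 - tau p R k) / 8}"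
      proof safe
        fix Y assume "(\<Sum>r<R. rho_hat N Y r * (1 - rho_hat N Y r) ^ k) \<ge> (\<Sum>r\<in>S. pmf p r * (1 - pmf p r) ^ k) / 2"
        thus "1 - tau_hat N Y R k \<ge> (1 - tau p R k) / 8"
          unfolding That T1 using sS unfolding f_def by linarith
      qed
      ultimately show ?thesis using prob_mono_ge by blast
    next
      case False
      hence Abig: "A > T / 4" by simp
      have cA: "exp (- ((3 / (10 * real k))^2 * N * (1 - pmf p m) / 2)) \<le> \<Delta> / 2"
      proof (rule exp_le_half[OF _ \<Delta>(1)])
        have eq: "(3 / (10 * real k))^2 * N * (1 - pmf p m) / 2 = 9 / 200 * (real N * \<epsilon>) / real k ^ 2"
          unfolding \<epsilon>_def by (simp add: power2_eq_square field_simps)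
        show "ln (2 / \<Delta>) \<le> (3 / (10 * real k))^2 * N * (1 - pmf p m) / 2"
        proof (cases "k = 1")
          case True
          have "real N * \<epsilon> \<ge> (25 * ln (2 / \<Delta>) / \<epsilon>) * \<epsilon>"
            using N' e0 Lpos kpos unfolding L_def
            by (intro mult_right_mono) (auto, smt (verit) mult_nonneg_nonneg zero_le_power2)
          hence "real N * \<epsilon> \<ge> 25 * ln (2 / \<Delta>)" using e0 by simp
          thus ?thesis unfolding eq using True l2pos by simp
        next
          case False
          hence k2: "k \<ge> 2" using k by simp
          have "3 * A > Oth" using Abig TAO by simp
          hence "3 * ((1 - \<epsilon>) * \<epsilon> ^ k) > \<epsilon> * (1 - \<epsilon>) ^ k" using Oge Aeq by simp
          hence e4: "\<epsilon> > 1/4" using eps_big[OF e0 e1 k2] by simp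
          have "real N * \<epsilon> \<ge> (164 * real k ^ 2 * L) * (1/4)"
            using NL e4 Lpos by (intro mult_mono) auto
          hence "real N * \<epsilon> \<ge> 41 * (real k ^ 2 * L)" by (simp add: mult.commute)
          hence "9 / 200 * (real N * \<epsilon>) \<ge> 9 / 200 * 41 * (real k ^ 2 * L)" by linarith
          hence X: "9 / 200 * (real N * \<epsilon>) / real k ^ 2 \<ge> 9 / 200 * 41 * L"
            using kpos by (simp add: field_simps)
          show ?thesis using X eq L2 Lpos by linarith
        qed
      qed
      have cB: "exp (- (2 * N / 100)) \<le> \<Delta> / 2"
      proof (rule exp_le_half[OF _ \<Delta>(1)])
        have "real k ^ 2 * L \<ge> L" using kpos Lpos by (simp add: one_le_power)
        hence "real N \<ge> 164 * L" using NL by simp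
        thus "ln (2 / \<Delta>) \<le> real (2 * N) / 100" using L2 Lpos by simp
      qed
      have mg: "measure_pmf.prob (sample p N)
         {Y. rho_hat N Y m * (1 - rho_hat N Y m) ^ k \<ge> pmf p m * (1 - pmf p m) ^ k / 2} \<ge> 1 - \<Delta>"
        by (rule m_good[OF k _ _ Npos cA cB]) (use e0 e1 in \<open>auto simp: \<epsilon>_def\<close>)
      have "{Y. rho_hat N Y m * (1 - rho_hat N Y m) ^ k \<ge> pmf p m * (1 - pmf p m) ^ k / 2}
          \<subseteq> {Y. 1 - tau_hat N Y R k \<ge> (1 - tau p R k) / 8}"
      proof safe
        fix Y assume Y: "rho_hat N Y m * (1 - rho_hat N Y m) ^ k \<ge> pmf p m * (1 - pmf p m) ^ k / 2"
        have "rho_hat N Y m * (1 - rho_hat N Y m) ^ k \<le> (\<Sum>r<R. rho_hat N Y r * (1 - rho_hat N Y r) ^ k)"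
          using m rho_hat_bounds[OF Npos, of Y] by (intro member_le_sum) auto
        thus "1 - tau_hat N Y R k \<ge> (1 - tau p R k) / 8"
          unfolding That T1 using Y Abig unfolding A_def f_def by linarith
      qed
      thus ?thesis using mg prob_mono_ge by blast
    qed
  qed
qed

end
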